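(* Let $2\le s\le t$ be integers and let $x_b,x_g,x_r\in[0,1]$ with $x_b+x_g+x_r=1$. If $\sqrt{x_b}+\sqrt{x_g}\le 1$, then \[ I_3(K'_{s,t},(x_b,x_g)) = x_b^{s/2}x_g^{t/2}\binom{s+t}{s}. \] If $\sqrt{x_b}+\sqrt{x_g}>1$, then \[ I_3(K'_{s,s},(x_b,x_g)) = \left(\frac{x_r}{2}\right)^{s}\binom{2s}{s}. \]
   Context: A $3$-colored complete graph is a complete graph $G=(V,\binom{V}{2})$ together with a coloring $f$ of its edges by the colors blue, green, red. For a color $i$, $\varrho_i(G)=e_i(G)/\binom{|V|}{2}$, where $e_i(G)$ is the number of edges of color $i$. For a $3$-colored complete graph $F$ on $\sigma$ vertices with coloring $g$, a set $X\subseteq V$ with $|X|=\sigma$ is a copy of $F$ in $G$ if there is a bijection $\pi:V(F)\to X$ with $g(uv)=f(\pi(u)\pi(v))$ for all distinct $u,v\in V(F)$; $N_3(F,G)$ is the number of copies and $\varrho_3(F,G)=N_3(F,G)/\binom{|V|}{\sigma}$. A sequence $(G_n)_{n\ge1}$ of $3$-colored complete graphs with $|V(G_n)|\to\infty$ is $F$-good if the limits $x_b=\lim\varrho_{\mathrm{blue}}(G_n)$, $x_g=\lim\varrho_{\mathrm{green}}(G_n)$ and $y=\lim\varrho_3(F,G_n)$ exist; it then realizes $(x_b,x_g,y)$. Define $I_3(F,(x_b,x_g))=\sup\{y: (x_b,x_g,y)\text{ is realized by some } F\text{-good sequence}\}$. For $2\le s\le t$, $K'_{s,t}$ is the $3$-colored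 complete graph on $V_1\sqcup V_2$ with $|V_1|=s$, $|V_2|=t$, in which edges inside $V_1$ are blue, edges inside $V_2$ are green, and edges between $V_1$ and $V_2$ are red. *)

theory Defs
  imports Complex_Main
begin

datatype color = Blue | Green | Red

text \<open>A 3-colored complete graph: a finite vertex set (of naturals) together with a
colouring of its edges (2-element subsets) by three colours.\<close>
type_synonym cgraph = "nat set \<times> (nat set \<Rightarrow> color)"

definition verts :: "cgraph \<Rightarrow> nat set" where "verts G = fst G"
definition col :: "cgraph \<Rightarrow> nat set \<Rightarrow> color" where "col G = snd G"

definition c3graph :: "cgraph \<Rightarrow> bool" where "c3graph G \<longleftrightarrow> finite (verts G)"

definition edges :: "nat set \<Rightarrow> nat set set" where
  "edges V = {e. \<exists>u v. u \<in> V \<and> v \<in> V \<and> u \<noteq> v \<and> e = {u, v}}"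

definition ecount :: "color \<Rightarrow> cgraph \<Rightarrow> nat" where
  "ecount i G = card {e \<in> edges (verts G). col G e = i}"

definition edens :: "color \<Rightarrow> cgraph \<Rightarrow> real" where
  "edens i G = real (ecount i G) / real (card (verts G) choose 2)"

definition is_copy :: "cgraph \<Rightarrow> cgraph \<Rightarrow> nat set \<Rightarrow> bool" where
  "is_copy F G X \<longleftrightarrow> X \<subseteq> verts G \<and> card X = card (verts F) \<and>
     (\<exists>\<pi>. bij_betw \<pi> (verts F) X \<and>
        (\<forall>u\<in>verts F. \<forall>v\<in>verts F. u \<noteq> v \<longrightarrow> col F {u, v} = col G {\<pi> u, \<pi> v}))"

definition N3 :: "cgraph \<Rightarrow> cgraph \<Rightarrow> nat" where
  "N3 F G = card {X. is_copy F G X}"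

definition dens3 :: "cgraph \<Rightarrow> cgraph \<Rightarrow> real" where
  "dens3 F G = real (N3 F G) / real (card (verts G) choose card (verts F))"

definition realizes :: "cgraph \<Rightarrow> (nat \<Rightarrow> cgraph) \<Rightarrow> real \<Rightarrow> real \<Rightarrow> real \<Rightarrow> bool" where
  "realizes F Gs xb xg y \<longleftrightarrow>
     (\<forall>n. c3graph (Gs n)) \<and>
     filterlim (\<lambda>n. card (verts (Gs n))) at_top sequentially \<and>
     (\<lambda>n. edens Blue (Gs n)) \<longlonglongrightarrow> xb \<and>
     (\<lambda>n. edens Green (Gs n)) \<longlonglongrightarrow> xg \<and>
     (\<lambda>n. dens3 F (Gs n)) \<longlonglongrightarrow> y"

definition I3 :: "cgraph \<Rightarrow> real \<Rightarrow> real \<Rightarrow> real" where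
  "I3 F xb xg = Sup {y. \<exists>Gs. realizes F Gs xb xg y}"

definition Kprime :: "nat \<Rightarrow> nat \<Rightarrow> cgraph" where
  "Kprime s t = ({0..<s+t},
     (\<lambda>e. if e \<subseteq> {0..<s} then Blue else if e \<inter> {0..<s} = {} then Green else Red))"

end

theory Submission
  imports Defs "HOL-Combinatorics.Multiset_Permutations"
begin


definition cl :: "('a \<Rightarrow> 'a \<Rightarrow> bool) \<Rightarrow> 'a set \<Rightarrow> nat \<Rightarrow> 'a list set" where
 "cl adj W r = {xs. length xs = r \<and> distinct xs \<and> set xs \<subseteq> W \<and>
     (\<forall>x\<in>set xs. \<forall>y\<in>set xs. x \<noteq> y \<longrightarrow> adj x y)}"

lemma cl_finite: "finite W \<Longrightarrow> finite (cl adj W r)"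
  by (rule finite_subset[OF _ finite_lists_length_eq[of W r]]) (auto simp: cl_def)

lemma cl_mono: "W \<subseteq> W' \<Longrightarrow> cl adj W r \<subseteq> cl adj W' r"
  by (auto simp: cl_def)

lemma cl_Suc:
  assumes sym: "\<forall>x y. adj x y \<longrightarrow> adj y x"
  shows "cl adj W (Suc r) = (\<Union>v\<in>W. (Cons v) ` cl adj {u\<in>W. u \<noteq> v \<and> adj v u} r)"
proof (intro equalityI subsetI)
  fix xs assume "xs \<in> cl adj W (Suc r)"
  then obtain v ys where xs: "xs = v # ys" and h: "length ys = r" "distinct (v#ys)" "set (v#ys) \<subseteq> W"
    "\<forall>x\<in>set (v#ys). \<forall>y\<in>set (v#ys). x \<noteq> y \<longrightarrow> adj x y"
    unfolding cl_def by (cases xs) auto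
  have "ys \<in> cl adj {u\<in>W. u \<noteq> v \<and> adj v u} r" using h unfolding cl_def by auto
  then show "xs \<in> (\<Union>v\<in>W. (Cons v) ` cl adj {u\<in>W. u \<noteq> v \<and> adj v u} r)" using xs h by auto
next
  fix xs assume "xs \<in> (\<Union>v\<in>W. (Cons v) ` cl adj {u\<in>W. u \<noteq> v \<and> adj v u} r)"
  then obtain v ys where "v \<in> W" "xs = v # ys" "ys \<in> cl adj {u\<in>W. u \<noteq> v \<and> adj v u} r" by auto
  moreover have "\<And>a b. adj a b \<Longrightarrow> adj b a" using sym by blast
  ultimately show "xs \<in> cl adj W (Suc r)" unfolding cl_def by auto
qed

lemma card_cl_Suc:
  assumes sym: "\<forall>x y. adj x y \<longrightarrow> adj y x" and fin: "finite W"
  shows "card (cl adj W (Suc r)) = (\<Sum>v\<in>W. card (cl adj {u\<in>W. u \<noteq> v \<and> adj v u} r))"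
proof -
  have e: "cl adj W (Suc r) = (\<Union>v\<in>W. (Cons v) ` cl adj {u\<in>W. u \<noteq> v \<and> adj v u} r)"
    by (rule cl_Suc) (use sym in blast)
  show ?thesis unfolding e
    by (subst card_UN_disjoint) (auto simp: fin cl_finite card_image)
qed

lemma cl_one: "cl adj W (Suc 0) = (\<lambda>u. [u]) ` W"
  unfolding cl_def by (auto simp: length_Suc_conv)

lemma card_cl_two:
  assumes sym: "\<forall>x y. adj x y \<longrightarrow> adj y x" and fin: "finite W"
  shows "card (cl adj W 2) = (\<Sum>v\<in>W. card {u\<in>W. u \<noteq> v \<and> adj v u})"
  proof -
  have "card (cl adj W 2) = (\<Sum>v\<in>W. card ((\<lambda>u. [u]) ` {u \<in> W. u \<noteq> v \<and> adj v u}))"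
    using card_cl_Suc[OF sym fin, where r=1] by (simp add: numeral_2_eq_2 cl_one)
  also have "\<dots> = (\<Sum>v\<in>W. card {u\<in>W. u \<noteq> v \<and> adj v u})"
    by (intro sum.cong refl card_image) (auto simp: inj_on_def)
  finally show ?thesis .
qed

lemma card_cl_two_le: "finite W \<Longrightarrow> card (cl adj W 2) \<le> card W ^ 2"
proof -
  assume f: "finite W"
  have "card (cl adj W 2) \<le> card {xs. set xs \<subseteq> W \<and> length xs = 2}"
    by (rule card_mono) (auto simp: f finite_lists_length_eq cl_def)
  then show ?thesis by (simp add: card_lists_length_eq f)
qed

lemma clique_bound:
  assumes sym: "\<forall>x y. adj x y \<longrightarrow> adj y x"
  shows "2 \<le> r \<Longrightarrow> finite W \<Longrightarrow> real (card (cl adj W r)) ^ 2 \<le> real (card (cl adj W 2)) ^ r"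
proof (induction r arbitrary: W rule: nat_induct_at_least)
  case base
  then show ?case by simp
next
  case (Suc r)
  define N where "N v = {u\<in>W. u \<noteq> v \<and> adj v u}" for v
  define P where "P = real (card (cl adj W 2))"
  have finN: "finite (N v)" for v using Suc.prems by (simp add: N_def)
  have key: "real (card (cl adj (N v) r)) \<le> sqrt (P ^ (r - 1)) * real (card (N v))" if "v \<in> W" for v
  proof -
    have a: "real (card (cl adj (N v) r)) ^ 2 \<le> real (card (cl adj (N v) 2)) ^ r"
      using Suc.IH[OF finN] .
    have b1: "real (card (cl adj (N v) 2)) \<le> P"
      unfolding P_def using cl_mono[of "N v" W adj 2] Suc.prems
      by (intro of_nat_mono card_mono cl_finite) (auto simp: N_def)
    have b2: "real (card (cl adj (N v) 2)) \<le> real (card (N v)) ^ 2"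
      using card_cl_two_le[OF finN, of adj v] by (metis of_nat_le_iff of_nat_power)
    have "real (card (cl adj (N v) 2)) ^ r = real (card (cl adj (N v) 2)) ^ (r - 1) * real (card (cl adj (N v) 2))"
      proof -
      have "r = Suc (r - 1)" using Suc.hyps by simp
      then show ?thesis by (metis power_Suc2)
    qed
    also have "\<dots> \<le> P ^ (r - 1) * real (card (N v)) ^ 2"
      by (intro mult_mono power_mono b1 b2) (auto simp: P_def)
    finally have "real (card (cl adj (N v) r)) ^ 2 \<le> (sqrt (P ^ (r - 1)) * real (card (N v))) ^ 2"
      using a by (simp add: power_mult_distrib P_def)
    then show ?thesis
      by (rule power2_le_imp_le) (simp add: P_def)
  qed
  have "real (card (cl adj W (Suc r))) = (\<Sum>v\<in>W. real (card (cl adj (N v) r)))"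
    using card_cl_Suc[OF sym Suc.prems, of r] unfolding N_def by simp
  also have "\<dots> \<le> (\<Sum>v\<in>W. sqrt (P ^ (r - 1)) * real (card (N v)))"
    by (rule sum_mono) (rule key)
  also have "\<dots> = sqrt (P ^ (r - 1)) * P"
    unfolding P_def card_cl_two[OF sym Suc.prems] N_def by (simp add: sum_distrib_left)
  finally have c: "real (card (cl adj W (Suc r))) \<le> sqrt (P ^ (r - 1)) * P" .
  have "real (card (cl adj W (Suc r))) ^ 2 \<le> (sqrt (P ^ (r - 1)) * P) ^ 2"
    by (rule power_mono[OF c]) simp
  also have "\<dots> = P ^ (r - 1) * P ^ 2"
    by (simp add: power_mult_distrib P_def)
  also have "\<dots> = P ^ Suc r"
    proof -
    have "r - 1 + 2 = Suc r" using Suc.hyps by simp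
    then show ?thesis by (metis power_add)
  qed
  finally show ?case unfolding P_def .
qed



lemma edges_alt: "edges V = {e. e \<subseteq> V \<and> card e = 2}"
  unfolding edges_def by (auto simp: card_2_iff)

lemma card_edges: "finite V \<Longrightarrow> card (edges V) = card V choose 2"
  unfolding edges_alt using n_subsets by (metis (no_types, lifting) Collect_cong)

lemma finite_edges: "finite V \<Longrightarrow> finite (edges V)"
  unfolding edges_alt by (rule finite_subset[of _ "Pow V"]) auto

lemma ecount_sum:
  assumes "finite (verts G)"
  shows "ecount Blue G + ecount Green G + ecount Red G = card (verts G) choose 2"
proof -
  let ?E = "edges (verts G)"
  let ?f = "\<lambda>c. {e \<in> ?E. col G e = c}"
  have fin: "finite ?E" using assms finite_edges by blast
  have "?E = ?f Blue \<union> ?f Green \<union> ?f Red" by (auto intro: color.exhaust)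
  then have "card ?E = card (?f Blue \<union> ?f Green \<union> ?f Red)" by simp
  also have "\<dots> = card (?f Blue) + card (?f Green) + card (?f Red)"
    using fin by (subst card_Un_disjoint; auto)+
  finally show ?thesis unfolding ecount_def using card_edges[OF assms] by simp
qed

definition adjc :: "cgraph \<Rightarrow> color \<Rightarrow> nat \<Rightarrow> nat \<Rightarrow> bool" where
  "adjc G c a b \<longleftrightarrow> a \<noteq> b \<and> col G {a, b} = c"

lemma adjc_sym: "\<forall>x y. adjc G c x y \<longrightarrow> adjc G c y x"
  by (auto simp: adjc_def insert_commute)

lemma card_pairs:
  assumes fin: "finite (verts G)"
  shows "card (cl (adjc G c) (verts G) 2) = 2 * ecount c G"
proof -
  let ?E = "{e \<in> edges (verts G). col G e = c}"
  define f1 where "f1 e = [Min e, Max e]" for e :: "nat set"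
  define f2 where "f2 e = [Max e, Min e]" for e :: "nat set"
  have mm: "Min {u, v} = min u v" "Max {u, v} = max u v" for u v :: nat by auto
  have eq: "cl (adjc G c) (verts G) 2 = f1 ` ?E \<union> f2 ` ?E"
  proof (intro equalityI subsetI)
    fix xs assume "xs \<in> cl (adjc G c) (verts G) 2"
    then obtain a b where xs: "xs = [a, b]" and h: "a \<noteq> b" "a \<in> verts G" "b \<in> verts G"
      "col G {a, b} = c"
      unfolding cl_def adjc_def by (auto simp: numeral_2_eq_2 length_Suc_conv)
    have e: "{a, b} \<in> ?E" using h unfolding edges_def by auto
    show "xs \<in> f1 ` ?E \<union> f2 ` ?E"
    proof (cases "a < b")
      case True
      then have "xs = f1 {a, b}" unfolding f1_def xs mm by auto
      then show ?thesis using e by blast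
    next
      case False
      then have "xs = f2 {a, b}" unfolding f2_def xs mm using h by auto
      then show ?thesis using e by blast
    qed
  next
    fix xs assume "xs \<in> f1 ` ?E \<union> f2 ` ?E"
    then obtain a b where "(xs = f1 {a, b} \<or> xs = f2 {a, b})" "a \<noteq> b" "a \<in> verts G" "b \<in> verts G"
      "col G {a, b} = c" unfolding edges_def by auto
    then show "xs \<in> cl (adjc G c) (verts G) 2"
      unfolding cl_def adjc_def f1_def f2_def mm by (auto simp: insert_commute min_def max_def)
  qed
  have em: "e = {Min e, Max e} \<and> Min e < Max e" if "e \<in> ?E" for e
  proof -
    from that obtain u v where "e = {u, v}" "u \<noteq> v" unfolding edges_def by auto
    then show ?thesis by (auto simp: mm min_def max_def)
  qed
  have inj1: "inj_on f1 ?E"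
  proof (rule inj_onI)
    fix x y assume "x \<in> ?E" "y \<in> ?E" "f1 x = f1 y"
    then show "x = y" using em[of x] em[of y] unfolding f1_def by (metis list.inject)
  qed
  have inj2: "inj_on f2 ?E"
  proof (rule inj_onI)
    fix x y assume "x \<in> ?E" "y \<in> ?E" "f2 x = f2 y"
    then show "x = y" using em[of x] em[of y] unfolding f2_def by (metis list.inject)
  qed
  have disj: "f1 ` ?E \<inter> f2 ` ?E = {}"
  proof -
    { fix x y assume "x \<in> ?E" "y \<in> ?E" "f1 x = f2 y"
      then have False using em[of x] em[of y] unfolding f1_def f2_def by auto }
    then show ?thesis by blast
  qed
  have finE: "finite ?E" using finite_edges[OF fin] by simp
  have "card (cl (adjc G c) (verts G) 2) = card (f1 ` ?E) + card (f2 ` ?E)"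
    unfolding eq by (rule card_Un_disjoint) (use finE disj in auto)
  also have "\<dots> = 2 * card ?E" using card_image[OF inj1] card_image[OF inj2] by simp
  finally show ?thesis unfolding ecount_def .
qed



definition kc :: "nat \<Rightarrow> nat \<Rightarrow> nat \<Rightarrow> color" where
  "kc s i j = (if i < s \<and> j < s then Blue else if s \<le> i \<and> s \<le> j then Green else Red)"

definition OC :: "nat \<Rightarrow> nat \<Rightarrow> cgraph \<Rightarrow> nat list set" where
  "OC s t G = {xs. length xs = s + t \<and> distinct xs \<and> set xs \<subseteq> verts G \<and>
     (\<forall>i<s+t. \<forall>j<s+t. i \<noteq> j \<longrightarrow> col G {xs!i, xs!j} = kc s i j)}"

lemma Kprime_verts: "verts (Kprime s t) = {0..<s+t}"
  by (simp add: verts_def Kprime_def)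

lemma Kprime_col: "i \<noteq> j \<Longrightarrow> col (Kprime s t) {i, j} = kc s i j"
  by (auto simp: col_def Kprime_def kc_def)

lemma finite_OC: "finite (verts G) \<Longrightarrow> finite (OC s t G)"
  by (rule finite_subset[OF _ finite_lists_length_eq[of "verts G" "s+t"]]) (auto simp: OC_def)

lemma OC_intro:
  assumes "length a = s" "length b = t" "distinct (a @ b)" "set a \<subseteq> verts G" "set b \<subseteq> verts G"
    and ca: "\<forall>x\<in>set a. \<forall>y\<in>set a. x \<noteq> y \<longrightarrow> col G {x, y} = Blue"
    and cb: "\<forall>x\<in>set b. \<forall>y\<in>set b. x \<noteq> y \<longrightarrow> col G {x, y} = Green"
    and cab: "\<forall>x\<in>set a. \<forall>y\<in>set b. col G {x, y} = Red"
  shows "a @ b \<in> OC s t G"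
  unfolding OC_def
proof (intro CollectI conjI allI impI)
  show "length (a @ b) = s + t" "distinct (a @ b)" "set (a @ b) \<subseteq> verts G" using assms by auto
  fix i j assume ij: "i < s + t" "j < s + t" "i \<noteq> j"
  have ne: "(a @ b) ! i \<noteq> (a @ b) ! j" using assms ij by (simp add: nth_eq_iff_index_eq)
  have ia: "i < s \<Longrightarrow> (a @ b) ! i \<in> set a" using assms by (simp add: nth_append)
  have ib: "\<not> i < s \<Longrightarrow> (a @ b) ! i \<in> set b" using assms ij by (simp add: nth_append)
  have ja: "j < s \<Longrightarrow> (a @ b) ! j \<in> set a" using assms by (simp add: nth_append)
  have jb: "\<not> j < s \<Longrightarrow> (a @ b) ! j \<in> set b" using assms ij by (simp add: nth_append)
  show "col G {(a @ b) ! i, (a @ b) ! j} = kc s i j"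
  proof (cases "i < s")
    case True
    then show ?thesis
    proof (cases "j < s")
      case True
      then show ?thesis using ca ia ja ne \<open>i < s\<close> by (simp add: kc_def)
    next
      case False
      then show ?thesis using cab ia jb \<open>i < s\<close> by (simp add: kc_def)
    qed
  next
    case False
    then show ?thesis
    proof (cases "j < s")
      case True
      then show ?thesis proof -
        have "col G {(a @ b) ! i, (a @ b) ! j} = col G {(a @ b) ! j, (a @ b) ! i}"
          by (simp add: insert_commute)
        also have "\<dots> = Red" using cab ib ja \<open>\<not> i < s\<close> True by blast
        finally show ?thesis using \<open>\<not> i < s\<close> True by (simp add: kc_def)
      qed
    next
      case False
      then show ?thesis using cb ib jb ne \<open>\<not> i < s\<close> by (simp add: kc_def)
    qed
  qed
qed

lemma perm_count:
  assumes fin: "finite (verts G)"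
  shows "N3 (Kprime s t) G * (fact s * fact t) \<le> card (OC s t G)"
proof -
  let ?F = "Kprime s t"
  define C where "C = {X. is_copy ?F G X}"
  have "C \<subseteq> Pow (verts G)" unfolding C_def is_copy_def by blast
  then have finC: "finite C" using fin finite_subset by blast
  have ex: "\<exists>\<pi>. bij_betw \<pi> {0..<s+t} X \<and>
        (\<forall>u\<in>{0..<s+t}. \<forall>v\<in>{0..<s+t}. u \<noteq> v \<longrightarrow> kc s u v = col G {\<pi> u, \<pi> v})" if "X \<in> C" for X
  proof -
    from that obtain \<pi> where b: "bij_betw \<pi> {0..<s+t} X" and
      c: "\<forall>u\<in>{0..<s+t}. \<forall>v\<in>{0..<s+t}. u \<noteq> v \<longrightarrow> col ?F {u, v} = col G {\<pi> u, \<pi> v}"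
      unfolding C_def is_copy_def Kprime_verts by blast
    have "\<forall>u\<in>{0..<s+t}. \<forall>v\<in>{0..<s+t}. u \<noteq> v \<longrightarrow> kc s u v = col G {\<pi> u, \<pi> v}"
      using c Kprime_col by metis
    then show ?thesis using b by blast
  qed
  define pi where "pi X = (SOME \<pi>. bij_betw \<pi> {0..<s+t} X \<and>
        (\<forall>u\<in>{0..<s+t}. \<forall>v\<in>{0..<s+t}. u \<noteq> v \<longrightarrow> kc s u v = col G {\<pi> u, \<pi> v}))" for X
  have pi: "bij_betw (pi X) {0..<s+t} X \<and>
        (\<forall>u\<in>{0..<s+t}. \<forall>v\<in>{0..<s+t}. u \<noteq> v \<longrightarrow> kc s u v = col G {pi X u, pi X v})" if "X \<in> C" for X
    unfolding pi_def by (rule someI_ex[OF ex[OF that]])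
  define A where "A X = pi X ` {0..<s}" for X
  define B where "B X = pi X ` {s..<s+t}" for X
  define Y where "Y X = (\<lambda>(a, b). a @ b) ` (permutations_of_set (A X) \<times> permutations_of_set (B X))" for X
  have XV: "X \<subseteq> verts G" if "X \<in> C" for X using that unfolding C_def is_copy_def by auto
  have props: "A X \<inter> B X = {} \<and> A X \<union> B X = X \<and> card (A X) = s \<and> card (B X) = t \<and>
      finite (A X) \<and> finite (B X) \<and>
      (\<forall>x\<in>A X. \<forall>y\<in>A X. x \<noteq> y \<longrightarrow> col G {x, y} = Blue) \<and>
      (\<forall>x\<in>B X. \<forall>y\<in>B X. x \<noteq> y \<longrightarrow> col G {x, y} = Green) \<and>
      (\<forall>x\<in>A X. \<forall>y\<in>B X. col G {x, y} = Red)" if X: "X \<in> C" for X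
  proof -
    have bij: "bij_betw (pi X) {0..<s+t} X" and cp: "\<And>u v. u < s+t \<Longrightarrow> v < s+t \<Longrightarrow> u \<noteq> v \<Longrightarrow>
        kc s u v = col G {pi X u, pi X v}" using pi[OF X] by auto
    have inj: "inj_on (pi X) {0..<s+t}" using bij_betw_imp_inj_on[OF bij] .
    have im: "pi X ` {0..<s+t} = X" using bij_betw_imp_surj_on[OF bij] .
    have d1: "A X \<inter> B X = {}"
    proof -
      { fix x assume "x \<in> A X" "x \<in> B X"
        then obtain u v where "u < s" "s \<le> v" "v < s+t" "x = pi X u" "x = pi X v" unfolding A_def B_def by auto
        then have False using inj_onD[OF inj, of u v] by auto }
      then show ?thesis by blast
    qed
    have "{0..<s+t} = {0..<s} \<union> {s..<s+t}" by auto
    then have u1: "A X \<union> B X = X" unfolding A_def B_def using im by (metis image_Un)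
    have c1: "card (A X) = s" unfolding A_def by (subst card_image) (auto intro: inj_on_subset[OF inj])
    have c2: "card (B X) = t" unfolding B_def by (subst card_image) (auto intro: inj_on_subset[OF inj])
    have b1: "\<forall>x\<in>A X. \<forall>y\<in>A X. x \<noteq> y \<longrightarrow> col G {x, y} = Blue"
    proof (intro ballI impI)
      fix x y assume "x \<in> A X" "y \<in> A X" "x \<noteq> y"
      then obtain u v where "u \<in> {0..<s}" "v \<in> {0..<s}" "x = pi X u" "y = pi X v" unfolding A_def by (meson imageE)
      moreover have "u \<noteq> v" using calculation \<open>x \<noteq> y\<close> by blast
      ultimately have "u < s" "v < s" "x = pi X u" "y = pi X v" "u \<noteq> v" by auto
      then show "col G {x, y} = Blue" using cp[of u v] by (simp add: kc_def)
    qed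
    have b2: "\<forall>x\<in>B X. \<forall>y\<in>B X. x \<noteq> y \<longrightarrow> col G {x, y} = Green"
    proof (intro ballI impI)
      fix x y assume "x \<in> B X" "y \<in> B X" "x \<noteq> y"
      then obtain u v where "u \<in> {s..<s+t}" "v \<in> {s..<s+t}" "x = pi X u" "y = pi X v" unfolding B_def by (meson imageE)
      moreover have "u \<noteq> v" using calculation \<open>x \<noteq> y\<close> by blast
      ultimately have "s \<le> u" "s \<le> v" "u < s+t" "v < s+t" "x = pi X u" "y = pi X v" "u \<noteq> v" by auto
      then show "col G {x, y} = Green" using cp[of u v] by (simp add: kc_def)
    qed
    have b3: "\<forall>x\<in>A X. \<forall>y\<in>B X. col G {x, y} = Red"
    proof (intro ballI impI)
      fix x y assume "x \<in> A X" "y \<in> B X"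
      then obtain u v where "u \<in> {0..<s}" "v \<in> {s..<s+t}" "x = pi X u" "y = pi X v" unfolding A_def B_def by (meson imageE)
      then have "u < s" "s \<le> v" "v < s+t" "x = pi X u" "y = pi X v" by auto
      then show "col G {x, y} = Red" using cp[of u v] by (simp add: kc_def)
    qed
    have f: "finite (A X)" "finite (B X)" unfolding A_def B_def by auto
    show ?thesis using d1 u1 c1 c2 b1 b2 b3 f by blast
  qed
  have YOC: "Y X \<subseteq> OC s t G" if X: "X \<in> C" for X
  proof
    fix xs assume "xs \<in> Y X"
    then obtain a b where xs: "xs = a @ b" and a: "a \<in> permutations_of_set (A X)"
      and b: "b \<in> permutations_of_set (B X)" unfolding Y_def by auto
    have sa: "set a = A X" "distinct a" using permutations_of_setD[OF a] by auto
    have sb: "set b = B X" "distinct b" using permutations_of_setD[OF b] by auto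
    note P = props[OF X]
    have "a @ b \<in> OC s t G"
    proof (rule OC_intro)
      show "length a = s" using length_finite_permutations_of_set[OF a] P by simp
      show "length b = t" using length_finite_permutations_of_set[OF b] P by simp
      show "distinct (a @ b)" using sa sb P by auto
      show "set a \<subseteq> verts G" "set b \<subseteq> verts G" using sa sb P XV[OF X] by auto
    qed (use sa sb P in auto)
    then show "xs \<in> OC s t G" using xs by simp
  qed
  have cardY: "card (Y X) = fact s * fact t" if X: "X \<in> C" for X
  proof -
    note P = props[OF X]
    have inj: "inj_on (\<lambda>(a, b). a @ b) (permutations_of_set (A X) \<times> permutations_of_set (B X))"
    proof (rule inj_onI, clarify)
      fix a b a' b' assume "a \<in> permutations_of_set (A X)" "a' \<in> permutations_of_set (A X)"
        "a @ b = a' @ b'"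
      moreover have "length a = length a'" using calculation
        by (simp add: length_finite_permutations_of_set)
      ultimately show "a = a' \<and> b = b'" by simp
    qed
    show ?thesis unfolding Y_def using P
      by (simp add: card_image[OF inj] card_cartesian_product)
  qed
  have setY: "set xs = X" if X: "X \<in> C" and "xs \<in> Y X" for X xs
  proof -
    from that obtain a b where xs: "xs = a @ b" and a: "a \<in> permutations_of_set (A X)"
      and b: "b \<in> permutations_of_set (B X)" unfolding Y_def by auto
    then show ?thesis using permutations_of_setD(1)[OF a] permutations_of_setD(1)[OF b] props[OF X] by auto
  qed
  have finY: "finite (Y X)" for X unfolding Y_def by simp
  have "card (\<Union>X\<in>C. Y X) = (\<Sum>X\<in>C. card (Y X))"
  proof (rule card_UN_disjoint[OF finC])
    show "\<forall>i\<in>C. finite (Y i)" using finY by blast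
    show "\<forall>i\<in>C. \<forall>j\<in>C. i \<noteq> j \<longrightarrow> Y i \<inter> Y j = {}" using setY by blast
  qed
  also have "\<dots> = card C * (fact s * fact t)" using cardY by simp
  finally have e: "card (\<Union>X\<in>C. Y X) = card C * (fact s * fact t)" .
  have "card (\<Union>X\<in>C. Y X) \<le> card (OC s t G)"
    by (rule card_mono[OF finite_OC[OF fin]]) (use YOC in blast)
  then show ?thesis using e unfolding N3_def C_def by simp
qed



lemma OC_nth:
  assumes "xs \<in> OC s t G" "i < s+t" "j < s+t" "i \<noteq> j"
  shows "col G {xs!i, xs!j} = kc s i j" "xs!i \<noteq> xs!j" "xs!i \<in> verts G"
  using assms unfolding OC_def by (auto simp: nth_eq_iff_index_eq)

lemma OC_case1:
  assumes fin: "finite (verts G)"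
  shows "card (OC s t G) \<le> card (cl (adjc G Blue) (verts G) s) * card (cl (adjc G Green) (verts G) t)"
proof -
  let ?f = "\<lambda>xs. (take s xs, drop s xs)"
  have inj: "inj_on ?f (OC s t G)"
    by (rule inj_onI) (metis append_take_drop_id prod.inject)
  have sub: "?f ` OC s t G \<subseteq> cl (adjc G Blue) (verts G) s \<times> cl (adjc G Green) (verts G) t"
  proof (rule subsetI)
    fix p assume "p \<in> ?f ` OC s t G"
    then obtain xs where xs: "xs \<in> OC s t G" and p: "p = ?f xs" by blast
    have l: "length xs = s + t" "distinct xs" "set xs \<subseteq> verts G" using xs unfolding OC_def by auto
    have A: "take s xs \<in> cl (adjc G Blue) (verts G) s"
      unfolding cl_def
    proof (intro CollectI conjI ballI impI)
      show "length (take s xs) = s" "distinct (take s xs)" "set (take s xs) \<subseteq> verts G"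
        using l set_take_subset[of s xs] by auto
      fix x y assume "x \<in> set (take s xs)" "y \<in> set (take s xs)" "x \<noteq> y"
      then obtain i j where "i < s" "j < s" "x = xs!i" "y = xs!j"
        using l by (auto simp: in_set_conv_nth)
      then show "adjc G Blue x y" using OC_nth[OF xs, of i j] \<open>x \<noteq> y\<close>
        by (auto simp: adjc_def kc_def)
    qed
    have B: "drop s xs \<in> cl (adjc G Green) (verts G) t"
      unfolding cl_def
    proof (intro CollectI conjI ballI impI)
      show "length (drop s xs) = t" "distinct (drop s xs)" "set (drop s xs) \<subseteq> verts G"
        using l set_drop_subset[of s xs] by auto
      fix x y assume "x \<in> set (drop s xs)" "y \<in> set (drop s xs)" "x \<noteq> y"
      then obtain i j where "i < t" "j < t" "x = xs!(s+i)" "y = xs!(s+j)"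
        using l by (auto simp: in_set_conv_nth)
      then show "adjc G Green x y" using OC_nth[OF xs, of "s+i" "s+j"] \<open>x \<noteq> y\<close>
        by (auto simp: adjc_def kc_def)
    qed
    show "p \<in> cl (adjc G Blue) (verts G) s \<times> cl (adjc G Green) (verts G) t" using A B p by simp
  qed
  have "card (OC s t G) = card (?f ` OC s t G)" using card_image[OF inj] by simp
  also have "\<dots> \<le> card (cl (adjc G Blue) (verts G) s \<times> cl (adjc G Green) (verts G) t)"
    by (rule card_mono[OF _ sub]) (simp add: cl_finite fin)
  finally show ?thesis by (simp add: card_cartesian_product)
qed

lemma OC_case2:
  assumes fin: "finite (verts G)" and s2: "2 \<le> s"
  shows "card (OC s s G) \<le> ecount Red G ^ s"
proof -
  let ?E = "{e \<in> edges (verts G). col G e = Red}"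
  define f where "f xs = map (\<lambda>i. {xs!i, xs!(s+i)}) [0..<s]" for xs :: "nat list"
  have sub: "f ` OC s s G \<subseteq> {zs. set zs \<subseteq> ?E \<and> length zs = s}"
  proof (rule subsetI)
    fix p assume "p \<in> f ` OC s s G"
    then obtain xs where xs: "xs \<in> OC s s G" and p: "p = f xs" by blast
    show "p \<in> {zs. set zs \<subseteq> ?E \<and> length zs = s}" unfolding p mem_Collect_eq
    proof
      show "length (f xs) = s" unfolding f_def by simp
      show "set (f xs) \<subseteq> ?E"
      proof
        fix e assume "e \<in> set (f xs)"
        then obtain i where i: "i < s" "e = {xs!i, xs!(s+i)}" unfolding f_def by auto
        have "col G e = Red" "xs!i \<noteq> xs!(s+i)" "xs!i \<in> verts G" "xs!(s+i) \<in> verts G"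
          using OC_nth[OF xs, of i "s+i"] OC_nth[OF xs, of "s+i" i] i by (auto simp: kc_def)
        then show "e \<in> ?E" using i unfolding edges_def by auto
      qed
    qed
  qed
  have inj: "inj_on f (OC s s G)"
  proof (rule inj_onI)
    fix xs ys assume xs: "xs \<in> OC s s G" and ys: "ys \<in> OC s s G" and e: "f xs = f ys"
    have pe: "{xs!i, xs!(s+i)} = {ys!i, ys!(s+i)}" if "i < s" for i
    proof -
      have "f xs ! i = f ys ! i" using e by simp
      then show ?thesis using that unfolding f_def by simp
    qed
    have fst: "ys!i = xs!i" if i: "i < s" for i
    proof (rule ccontr)
      assume ne: "ys!i \<noteq> xs!i"
      then have sw: "ys!i = xs!(s+i)" "ys!(s+i) = xs!i" using pe[OF i] by (auto simp: doubleton_eq_iff)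
      define j :: nat where "j = (if i = 0 then 1 else 0)"
      have j: "j < s" "j \<noteq> i" using s2 unfolding j_def by auto
      have cy: "col G {ys!i, ys!j} = Blue" using OC_nth[OF ys, of i j] i j by (simp add: kc_def)
      show False
      proof (cases "ys!j = xs!j")
        case True
        have "col G {xs!(s+i), xs!j} = Red" using OC_nth[OF xs, of "s+i" j] i j by (simp add: kc_def)
        then show False using cy sw True by simp
      next
        case False
        then have "ys!j = xs!(s+j)" using pe[OF j(1)] by (auto simp: doubleton_eq_iff)
        moreover have "col G {xs!(s+i), xs!(s+j)} = Green" using OC_nth[OF xs, of "s+i" "s+j"] i j by (simp add: kc_def)
        ultimately show False using cy sw by simp
      qed
    qed
    have snd: "ys!(s+i) = xs!(s+i)" if i: "i < s" for i
      using pe[OF i] fst[OF i] by (auto simp: doubleton_eq_iff)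
    have lx: "length xs = s + s" and ly: "length ys = s + s" using xs ys unfolding OC_def by auto
    show "xs = ys"
    proof (rule nth_equalityI)
      show "length xs = length ys" using lx ly by simp
      fix k assume "k < length xs"
      then show "xs!k = ys!k"
      proof (cases "k < s")
        case True then show ?thesis using fst by simp
      next
        case False
        then obtain i where "k = s + i" "i < s" using \<open>k < length xs\<close> lx
          by (metis add_less_cancel_left le_add_diff_inverse not_less)
        then show ?thesis using snd by simp
      qed
    qed
  qed
  have finE: "finite ?E" using finite_edges[OF fin] by simp
  have "card (OC s s G) = card (f ` OC s s G)" using card_image[OF inj] by simp
  also have "\<dots> \<le> card {zs. set zs \<subseteq> ?E \<and> length zs = s}"
    by (rule card_mono[OF _ sub]) (simp add: finite_lists_length_eq finE)
  also have "\<dots> = ecount Red G ^ s" unfolding ecount_def by (simp add: card_lists_length_eq finE)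
  finally show ?thesis .
qed



lemma inv_n_lim: "(\<lambda>n. a / real n) \<longlonglongrightarrow> 0"
  by (rule tendsto_divide_0[OF tendsto_const])
     (rule filterlim_at_top_imp_at_infinity[OF filterlim_real_sequentially])

lemma binom_lim:
  fixes m :: "nat \<Rightarrow> nat"
  assumes lim: "(\<lambda>n. real (m n) / real n) \<longlonglongrightarrow> c"
  shows "(\<lambda>n. real (m n choose k) / real n ^ k) \<longlonglongrightarrow> c ^ k / fact k"
proof -
  have e: "real (m n choose k) / real n ^ k =
      (\<Prod>i\<in>{0..<k}. real (m n) / real n - real i / real n) / fact k" for n
  proof -
    have a: "real (m n choose k) = (\<Prod>i=0..<k. real (m n) - real i) / fact k"
      using gbinomial_mult_fact'[of "real (m n)" k] binomial_gbinomial[of "m n" k, where 'a=real]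
      by (simp add: field_simps)
    have b: "(\<Prod>i\<in>{0..<k}. real (m n) / real n - real i / real n) = (\<Prod>i=0..<k. real (m n) - real i) / real n ^ k"
      by (simp add: diff_divide_distrib[symmetric] prod_dividef)
    show ?thesis unfolding a b by simp
  qed
  have "(\<lambda>n. \<Prod>i\<in>{0..<k}. real (m n) / real n - real i / real n) \<longlonglongrightarrow> (\<Prod>i\<in>{0..<k}. c - 0)"
  proof -
    have h: "(\<lambda>n. real (m n) / real n - real i / real n) \<longlonglongrightarrow> c - 0" for i :: nat
      using tendsto_diff[OF lim inv_n_lim[of "real i"]] .
    show ?thesis
      using tendsto_prod[of "{0..<k}" "\<lambda>i n. real (m n) / real n - real i / real n" "\<lambda>i. c - 0" sequentially] h
      by blast
  qed
  moreover have "(\<Prod>i\<in>{0..<k}. c - 0) = c ^ k" by simp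
  ultimately have l: "(\<lambda>n. \<Prod>i\<in>{0..<k}. real (m n) / real n - real i / real n) \<longlonglongrightarrow> c ^ k" by simp
  have "(\<lambda>n. (\<Prod>i\<in>{0..<k}. real (m n) / real n - real i / real n) / fact k) \<longlonglongrightarrow> c ^ k / fact k"
    using tendsto_divide[OF l tendsto_const[of "fact k"]] by simp
  then show ?thesis unfolding e .
qed

lemma id_lim: "(\<lambda>n. real n / real n) \<longlonglongrightarrow> 1"
proof -
  have "eventually (\<lambda>n. 1 = real n / real n) sequentially"
    by (rule eventually_sequentiallyI[of 1]) simp
  then show ?thesis by (rule Lim_transform_eventually[OF tendsto_const])
qed

lemma binom_n_lim: "(\<lambda>n. real (n choose k) / real n ^ k) \<longlonglongrightarrow> 1 / fact k"
  using binom_lim[of "\<lambda>n. n" 1 k, OF id_lim] by simp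

lemma floor_lim:
  assumes "0 \<le> p"
  shows "(\<lambda>n. real (nat \<lfloor>p * real n\<rfloor>) / real n) \<longlonglongrightarrow> p"
proof (rule tendsto_sandwich)
  have "(\<lambda>n. p - 1 / real n) \<longlonglongrightarrow> p - 0" by (rule tendsto_diff[OF tendsto_const inv_n_lim])
  then show "(\<lambda>n. p - 1 / real n) \<longlonglongrightarrow> p" by simp
  show "(\<lambda>n. p) \<longlonglongrightarrow> p" by simp
  show "eventually (\<lambda>n. p - 1 / real n \<le> real (nat \<lfloor>p * real n\<rfloor>) / real n) sequentially"
  proof (rule eventually_sequentiallyI[of 1])
    fix n :: nat assume "1 \<le> n"
    then have np: "real n > 0" by simp
    have "0 \<le> \<lfloor>p * real n\<rfloor>" using assms by simp
    then have "real (nat \<lfloor>p * real n\<rfloor>) = real_of_int \<lfloor>p * real n\<rfloor>" by simp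
    then have "p * real n - 1 \<le> real (nat \<lfloor>p * real n\<rfloor>)"
      using real_of_int_floor_gt_diff_one[of "p * real n"] by linarith
    then have "(p * real n - 1) / real n \<le> real (nat \<lfloor>p * real n\<rfloor>) / real n"
      using np by (intro divide_right_mono) auto
    moreover have "p - 1 / real n = (p * real n - 1) / real n" using np by (simp add: field_simps)
    ultimately show "p - 1 / real n \<le> real (nat \<lfloor>p * real n\<rfloor>) / real n" by simp
  qed
  show "eventually (\<lambda>n. real (nat \<lfloor>p * real n\<rfloor>) / real n \<le> p) sequentially"
  proof (rule eventually_sequentiallyI[of 1])
    fix n :: nat assume "1 \<le> n"
    then have np: "real n > 0" by simp
    have "real (nat \<lfloor>p * real n\<rfloor>) \<le> p * real n" using assms np
      by (simp add: of_nat_nat)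
    then show "real (nat \<lfloor>p * real n\<rfloor>) / real n \<le> p" using np by (simp add: field_simps)
  qed
qed



lemma choose2_real: "real (n choose 2) * 2 = real n * (real n - 1)"
proof -
  have "real (n choose 2) = (real n gchoose 2)" by (simp add: binomial_gbinomial)
  moreover have "(real n gchoose 2) * fact 2 = (\<Prod>i = 0..<2. real n - real i)"
    by (rule gbinomial_mult_fact')
  moreover have "(\<Prod>i = 0..<2. real n - real i) = real n * (real n - 1)"
    by (simp add: numeral_2_eq_2)
  ultimately show ?thesis by simp
qed

lemma choose2_le: "real (n choose 2) \<le> real n ^ 2 / 2"
  using choose2_real[of n] by (simp add: power2_eq_square field_simps)

lemma ecount_eq:
  assumes "2 \<le> card (verts G)"
  shows "real (ecount c G) = edens c G * real (card (verts G) choose 2)"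
proof -
  have "card (verts G) choose 2 > 0" using assms by simp
  then show ?thesis unfolding edens_def by simp
qed

lemma edens_nonneg: "0 \<le> edens c G" unfolding edens_def by simp

lemma edens_red:
  assumes "finite (verts G)" "2 \<le> card (verts G)"
  shows "edens Red G = 1 - edens Blue G - edens Green G"
proof -
  have p: "card (verts G) choose 2 > 0" using assms by simp
  have "real (ecount Blue G) + real (ecount Green G) + real (ecount Red G) = real (card (verts G) choose 2)"
    using ecount_sum[OF assms(1)] by (metis of_nat_add)
  then have "real (ecount Red G) = real (card (verts G) choose 2) - real (ecount Blue G) - real (ecount Green G)"
    by linarith
  then show ?thesis unfolding edens_def using p by (simp add: diff_divide_distrib)
qed

lemma sqrt_bound:
  fixes x P Q :: real
  assumes "0 \<le> x" "x ^ 2 \<le> P ^ s" "P \<le> Q" "0 \<le> P"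
  shows "x \<le> sqrt Q ^ s"
proof -
  have "x \<le> sqrt (P ^ s)" using assms by (intro real_le_rsqrt) auto
  also have "\<dots> = sqrt P ^ s" by (simp add: real_sqrt_power)
  also have "\<dots> \<le> sqrt Q ^ s" using assms by (intro power_mono) auto
  finally show ?thesis .
qed

lemma clique_count_bound:
  assumes fin: "finite (verts G)" and n2: "2 \<le> card (verts G)" and r2: "2 \<le> r"
  shows "real (card (cl (adjc G c) (verts G) r)) \<le> (sqrt (edens c G) * real (card (verts G))) ^ r"
proof -
  let ?n = "card (verts G)"
  let ?P = "real (card (cl (adjc G c) (verts G) 2))"
  have P: "?P = 2 * real (ecount c G)" using card_pairs[OF fin, of c] by simp
  have "?P = 2 * edens c G * real (?n choose 2)" unfolding P ecount_eq[OF n2] by simp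
  also have "\<dots> \<le> 2 * edens c G * (real ?n ^ 2 / 2)"
    using choose2_le[of ?n] edens_nonneg[of c G] by (intro mult_left_mono) auto
  finally have PQ: "?P \<le> edens c G * real ?n ^ 2" by simp
  have "real (card (cl (adjc G c) (verts G) r)) \<le> sqrt (edens c G * real ?n ^ 2) ^ r"
    by (rule sqrt_bound[OF _ clique_bound[OF adjc_sym r2 fin] PQ]) auto
  also have "\<dots> = (sqrt (edens c G) * real ?n) ^ r" by (simp add: real_sqrt_mult)
  finally show ?thesis .
qed

lemma ub1:
  assumes fin: "finite (verts G)" and n2: "2 \<le> card (verts G)" and "2 \<le> s" "2 \<le> t"
  shows "real (N3 (Kprime s t) G) * (fact s * fact t) \<le>
     sqrt (edens Blue G) ^ s * sqrt (edens Green G) ^ t * real (card (verts G)) ^ (s + t)"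
proof -
  let ?n = "real (card (verts G))"
  have "real (N3 (Kprime s t) G) * (fact s * fact t) = real (N3 (Kprime s t) G * (fact s * fact t))" by simp
  also have "\<dots> \<le> real (card (OC s t G))" using perm_count[OF fin, of s t] by (metis of_nat_le_iff)
  also have "\<dots> \<le> real (card (cl (adjc G Blue) (verts G) s)) * real (card (cl (adjc G Green) (verts G) t))"
    using OC_case1[OF fin, of s t] by (metis of_nat_le_iff of_nat_mult)
  also have "\<dots> \<le> (sqrt (edens Blue G) * ?n) ^ s * (sqrt (edens Green G) * ?n) ^ t"
    using clique_count_bound[OF fin n2 assms(3), of Blue] clique_count_bound[OF fin n2 assms(4), of Green]
    by (intro mult_mono) auto
  also have "\<dots> = sqrt (edens Blue G) ^ s * sqrt (edens Green G) ^ t * ?n ^ (s + t)"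
    by (simp add: power_mult_distrib power_add)
  finally show ?thesis .
qed

lemma ub2:
  assumes fin: "finite (verts G)" and n2: "2 \<le> card (verts G)" and "2 \<le> s"
  shows "real (N3 (Kprime s s) G) * (fact s * fact s) \<le>
     (edens Red G / 2) ^ s * real (card (verts G)) ^ (s + s)"
proof -
  let ?n = "card (verts G)"
  have "real (N3 (Kprime s s) G) * (fact s * fact s) = real (N3 (Kprime s s) G * (fact s * fact s))" by simp
  also have "\<dots> \<le> real (card (OC s s G))" using perm_count[OF fin, of s s] by (metis of_nat_le_iff)
  also have "\<dots> \<le> real (ecount Red G) ^ s"
    using OC_case2[OF fin assms(3)] by (metis of_nat_le_iff of_nat_power)
  also have "\<dots> \<le> (edens Red G * (real ?n ^ 2 / 2)) ^ s"
    unfolding ecount_eq[OF n2]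
    using choose2_le[of ?n] edens_nonneg[of Red G] by (intro power_mono mult_left_mono) auto
  also have "\<dots> = (edens Red G / 2) ^ s * real ?n ^ (s + s)"
  proof -
    have "(real ?n ^ 2) ^ s = real ?n ^ (s + s)" by (metis mult_2 power_mult)
    moreover have "edens Red G * (real ?n ^ 2 / 2) = (edens Red G / 2) * real ?n ^ 2" by simp
    ultimately show ?thesis by (simp only: power_mult_distrib)
  qed
  finally show ?thesis .
qed



lemma powr_sqrt: "0 \<le> x \<Longrightarrow> 0 < s \<Longrightarrow> x powr (real s / 2) = sqrt x ^ s"
proof (cases "x = 0")
  case False
  assume "0 \<le> x"
  then have x: "0 < x" using False by simp
  have "sqrt x ^ s = (x powr (1/2)) ^ s" using x by (simp add: powr_half_sqrt)
  also have "\<dots> = x powr (real s * (1/2))" using x by (simp add: powr_power)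
  finally show ?thesis by simp
qed simp

lemma upper_ev:
  fixes Gs :: "nat \<Rightarrow> cgraph" and Bk :: "nat \<Rightarrow> real"
  assumes nlim0: "filterlim (\<lambda>k. card (verts (Gs k))) at_top sequentially"
    and B: "Bk \<longlonglongrightarrow> \<beta>"
    and bnd: "\<And>k. 2 \<le> card (verts (Gs k)) \<Longrightarrow>
       real (N3 (Kprime s t) (Gs k)) * (fact s * fact t) \<le> Bk k * real (card (verts (Gs k))) ^ (s + t)"
  shows "\<exists>U. U \<longlonglongrightarrow> \<beta> * fact (s + t) / (fact s * fact t) \<and>
     eventually (\<lambda>k. dens3 (Kprime s t) (Gs k) \<le> U k) sequentially"
proof -
  define n where "n k = card (verts (Gs k))" for k
  define h where "h m = real (m choose (s + t)) / real m ^ (s + t)" for m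
  have nlim: "filterlim n at_top sequentially" using nlim0 unfolding n_def by auto
  have hl: "(\<lambda>k. h (n k)) \<longlonglongrightarrow> 1 / fact (s + t)"
    using filterlim_compose[OF binom_n_lim[of "s+t"] nlim] unfolding h_def by (simp add: o_def)
  have ul: "(\<lambda>k. Bk k / (fact s * fact t * h (n k))) \<longlonglongrightarrow> \<beta> / (fact s * fact t * (1 / fact (s + t)))"
    by (intro tendsto_divide B tendsto_mult tendsto_const hl) auto
  have ev: "eventually (\<lambda>k. max 2 (s + t) \<le> n k) sequentially"
    using nlim unfolding filterlim_at_top by blast
  have le: "eventually (\<lambda>k. dens3 (Kprime s t) (Gs k) \<le> Bk k / (fact s * fact t * h (n k))) sequentially"
    using ev
  proof (rule eventually_mono)
    fix k assume k: "max 2 (s + t) \<le> n k"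
    have cp: "0 < real (n k choose (s + t))" using k by simp
    have np: "0 < real (n k)" using k by simp
    have b: "real (N3 (Kprime s t) (Gs k)) * (fact s * fact t) \<le> Bk k * real (n k) ^ (s + t)"
      using bnd[of k] k unfolding n_def by simp
    have fp: "0 < (fact s * fact t :: real)" by simp
    have "dens3 (Kprime s t) (Gs k) = real (N3 (Kprime s t) (Gs k)) / real (n k choose (s + t))"
      unfolding dens3_def n_def by (simp add: Kprime_verts)
    also have "\<dots> = real (N3 (Kprime s t) (Gs k)) * (fact s * fact t) / (fact s * fact t * real (n k choose (s + t)))"
      using fp by (simp add: field_simps)
    also have "\<dots> \<le> Bk k * real (n k) ^ (s + t) / (fact s * fact t * real (n k choose (s + t)))"
      using b cp fp by (intro divide_right_mono) auto
    also have "\<dots> = Bk k / (fact s * fact t * h (n k))"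
      unfolding h_def using np cp by (simp add: field_simps)
    finally show "dens3 (Kprime s t) (Gs k) \<le> Bk k / (fact s * fact t * h (n k))" .
  qed
  have "\<beta> / (fact s * fact t * (1 / fact (s + t))) = \<beta> * fact (s + t) / (fact s * fact t)" by simp
  then show ?thesis using ul le by metis
qed

lemma upper_general:
  fixes Gs :: "nat \<Rightarrow> cgraph" and Bk :: "nat \<Rightarrow> real"
  assumes R: "realizes (Kprime s t) Gs xb xg y"
    and B: "Bk \<longlonglongrightarrow> \<beta>"
    and bnd: "\<And>k. 2 \<le> card (verts (Gs k)) \<Longrightarrow>
       real (N3 (Kprime s t) (Gs k)) * (fact s * fact t) \<le> Bk k * real (card (verts (Gs k))) ^ (s + t)"
  shows "y \<le> \<beta> * fact (s + t) / (fact s * fact t)"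
proof -
  have nlim: "filterlim (\<lambda>k. card (verts (Gs k))) at_top sequentially" using R unfolding realizes_def by auto
  have dl: "(\<lambda>k. dens3 (Kprime s t) (Gs k)) \<longlonglongrightarrow> y" using R unfolding realizes_def by auto
  obtain U where U: "U \<longlonglongrightarrow> \<beta> * fact (s + t) / (fact s * fact t)"
    "eventually (\<lambda>k. dens3 (Kprime s t) (Gs k) \<le> U k) sequentially"
    using upper_ev[OF nlim B bnd] by blast
  show ?thesis by (rule tendsto_le[OF _ U(1) dl U(2)]) simp
qed



lemma OC_copy:
  assumes xs: "xs \<in> OC s t G"
  shows "is_copy (Kprime s t) G (set xs)"
proof -
  have l: "length xs = s + t" "distinct xs" "set xs \<subseteq> verts G" using xs unfolding OC_def by auto
  have bij: "bij_betw ((!) xs) {0..<s+t} (set xs)"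
    by (rule bij_betw_nth) (use l in auto)
  have c: "\<forall>u\<in>verts (Kprime s t). \<forall>v\<in>verts (Kprime s t). u \<noteq> v \<longrightarrow>
      col (Kprime s t) {u, v} = col G {xs ! u, xs ! v}"
    using OC_nth(1)[OF xs] Kprime_col by (simp add: Kprime_verts)
  show ?thesis unfolding is_copy_def
    using l bij c by (auto simp: Kprime_verts distinct_card)
qed

lemma cons_lower:
  assumes V: "verts G = {0..<n}" and k: "k1 \<le> k2" "k2 \<le> n"
    and cB: "\<And>u v. u < k1 \<Longrightarrow> v < k1 \<Longrightarrow> u \<noteq> v \<Longrightarrow> col G {u, v} = Blue"
    and cG: "\<And>u v. k1 \<le> u \<Longrightarrow> u < k2 \<Longrightarrow> k1 \<le> v \<Longrightarrow> v < k2 \<Longrightarrow> u \<noteq> v \<Longrightarrow> col G {u, v} = Green"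
    and cR: "\<And>u v. u < k1 \<Longrightarrow> k1 \<le> v \<Longrightarrow> v < k2 \<Longrightarrow> col G {u, v} = Red"
  shows "(k1 choose s) * ((k2 - k1) choose t) \<le> N3 (Kprime s t) G"
proof -
  define SS where "SS = {S. S \<subseteq> {0..<k1} \<and> card S = s}"
  define TT where "TT = {T. T \<subseteq> {k1..<k2} \<and> card T = t}"
  define f where "f p = fst p \<union> snd p" for p :: "nat set \<times> nat set"
  have inj: "inj_on f (SS \<times> TT)"
  proof (rule inj_onI)
    fix p p' assume a: "p \<in> SS \<times> TT" "p' \<in> SS \<times> TT" "f p = f p'"
    obtain S T S' T' where p: "p = (S, T)" "p' = (S', T')" by (cases p, cases p') auto
    from a have "S \<subseteq> {0..<k1}" "T \<subseteq> {k1..<k2}" "S' \<subseteq> {0..<k1}" "T' \<subseteq> {k1..<k2}" "S \<union> T = S' \<union> T'"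
      unfolding SS_def TT_def f_def p by auto
    moreover have "S = (S \<union> T) \<inter> {0..<k1}" "S' = (S' \<union> T') \<inter> {0..<k1}"
      "T = (S \<union> T) \<inter> {k1..<k2}" "T' = (S' \<union> T') \<inter> {k1..<k2}" using calculation by auto
    ultimately show "p = p'" unfolding p by metis
  qed
  have sub: "f ` (SS \<times> TT) \<subseteq> {X. is_copy (Kprime s t) G X}"
  proof (rule subsetI)
    fix X assume "X \<in> f ` (SS \<times> TT)"
    then obtain S T where X: "X = S \<union> T" and S: "S \<subseteq> {0..<k1}" "card S = s"
      and T: "T \<subseteq> {k1..<k2}" "card T = t" unfolding SS_def TT_def f_def by auto
    have fS: "finite S" "finite T" using S T finite_subset by auto
    define a where "a = sorted_list_of_set S"
    define b where "b = sorted_list_of_set T"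
    have sa: "set a = S" "distinct a" "length a = s" unfolding a_def using fS S by auto
    have sb: "set b = T" "distinct b" "length b = t" unfolding b_def using fS T by auto
    have "a @ b \<in> OC s t G"
    proof (rule OC_intro)
      show "length a = s" "length b = t" using sa sb by auto
      have "{0..<k1} \<inter> {k1..<k2} = {}" by auto
      then have "set a \<inter> set b = {}" using sa(1) sb(1) S(1) T(1) by blast
      then show "distinct (a @ b)" using sa sb by auto
      show "set a \<subseteq> verts G" "set b \<subseteq> verts G" using sa sb S T k V by auto
      show "\<forall>x\<in>set a. \<forall>y\<in>set a. x \<noteq> y \<longrightarrow> col G {x, y} = Blue"
      proof (intro ballI impI)
        fix x y assume "x \<in> set a" "y \<in> set a" "x \<noteq> y"
        then have "x \<in> {0..<k1}" "y \<in> {0..<k1}" using sa(1) S(1) by auto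
        then show "col G {x, y} = Blue" using cB \<open>x \<noteq> y\<close> by simp
      qed
      show "\<forall>x\<in>set b. \<forall>y\<in>set b. x \<noteq> y \<longrightarrow> col G {x, y} = Green"
      proof (intro ballI impI)
        fix x y assume "x \<in> set b" "y \<in> set b" "x \<noteq> y"
        then have "x \<in> {k1..<k2}" "y \<in> {k1..<k2}" using sb(1) T(1) by auto
        then show "col G {x, y} = Green" using cG \<open>x \<noteq> y\<close> by simp
      qed
      show "\<forall>x\<in>set a. \<forall>y\<in>set b. col G {x, y} = Red"
      proof (intro ballI impI)
        fix x y assume "x \<in> set a" "y \<in> set b"
        then have "x \<in> {0..<k1}" "y \<in> {k1..<k2}" using sa(1) S(1) sb(1) T(1) by auto
        then show "col G {x, y} = Red" using cR by simp
      qed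
    qed
    from OC_copy[OF this] show "X \<in> {X. is_copy (Kprime s t) G X}" using sa sb X by simp
  qed
  have fin: "finite {X. is_copy (Kprime s t) G X}"
  proof -
    have "{X. is_copy (Kprime s t) G X} \<subseteq> Pow {0..<n}" unfolding is_copy_def V by blast
    then show ?thesis using finite_subset by blast
  qed
  have "card (SS \<times> TT) = (k1 choose s) * ((k2 - k1) choose t)"
    unfolding SS_def TT_def card_cartesian_product
    using n_subsets[of "{0..<k1}" s] n_subsets[of "{k1..<k2}" t] by simp
  moreover have "card (f ` (SS \<times> TT)) = card (SS \<times> TT)" using card_image[OF inj] by simp
  moreover have "card (f ` (SS \<times> TT)) \<le> N3 (Kprime s t) G" unfolding N3_def by (rule card_mono[OF fin sub])
  ultimately show ?thesis by simp
qed

definition col1 :: "nat \<Rightarrow> nat \<Rightarrow> nat set \<Rightarrow> color" where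
  "col1 k1 k2 e = (if Max e < k1 then Blue else if k1 \<le> Min e \<and> Max e < k2 then Green else Red)"
definition col2 :: "nat \<Rightarrow> nat \<Rightarrow> nat set \<Rightarrow> color" where
  "col2 k1 k2 e = (if Max e < k1 then Blue else if Min e < k1 \<and> Max e < k2 then Red else Green)"

definition G1 :: "nat \<Rightarrow> nat \<Rightarrow> nat \<Rightarrow> cgraph" where "G1 n k1 k2 = ({0..<n}, col1 k1 k2)"
definition G2 :: "nat \<Rightarrow> nat \<Rightarrow> nat \<Rightarrow> cgraph" where "G2 n k1 k2 = ({0..<n}, col2 k1 k2)"

lemma G1_simps: "verts (G1 n k1 k2) = {0..<n}" "col (G1 n k1 k2) = col1 k1 k2"
  by (simp_all add: G1_def verts_def col_def)
lemma G2_simps: "verts (G2 n k1 k2) = {0..<n}" "col (G2 n k1 k2) = col2 k1 k2"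
  by (simp_all add: G2_def verts_def col_def)

lemma G1_lower:
  assumes "k1 \<le> k2" "k2 \<le> n"
  shows "(k1 choose s) * ((k2 - k1) choose t) \<le> N3 (Kprime s t) (G1 n k1 k2)"
  by (rule cons_lower[OF G1_simps(1) assms]) (auto simp: G1_simps col1_def)

lemma G2_lower:
  assumes "k1 \<le> k2" "k2 \<le> n"
  shows "(k1 choose s) * ((k2 - k1) choose t) \<le> N3 (Kprime s t) (G2 n k1 k2)"
  by (rule cons_lower[OF G2_simps(1) assms]) (auto simp: G2_simps col2_def)

lemma edges_iff: "e \<in> edges V \<longleftrightarrow> (\<exists>u v. u \<in> V \<and> v \<in> V \<and> u < v \<and> e = {u, v})"
proof
  assume "e \<in> edges V"
  then obtain u v where uv: "u \<in> V" "v \<in> V" "u \<noteq> v" "e = {u, v}" unfolding edges_def by blast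
  show "\<exists>u v. u \<in> V \<and> v \<in> V \<and> u < v \<and> e = {u, v}"
  proof (cases "u < v")
    case True
    then show ?thesis using uv by blast
  next
    case False
    then have "v < u" using uv by simp
    moreover have "e = {v, u}" using uv by (simp add: insert_commute)
    ultimately show ?thesis using uv by blast
  qed
next
  assume "\<exists>u v. u \<in> V \<and> v \<in> V \<and> u < v \<and> e = {u, v}"
  then show "e \<in> edges V" unfolding edges_def by fastforce
qed

lemma MaxMin2: "u < v \<Longrightarrow> Max {u, v} = v" "u < v \<Longrightarrow> Min {u, v} = (u::nat)"
  by auto

lemma edges_filter_eq:
  assumes P: "\<And>u v. u < v \<Longrightarrow> P {u, v} \<longleftrightarrow> (u \<in> A \<and> v \<in> A)" and A: "A \<subseteq> {0..<n}"
  shows "{e \<in> edges {0..<n}. P e} = edges A"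
proof (intro equalityI subsetI)
  fix e assume "e \<in> {e \<in> edges {0..<n}. P e}"
  then obtain u v where "u < v" "e = {u, v}" "P e" unfolding edges_iff by blast
  then show "e \<in> edges A" using P[of u v] unfolding edges_iff by blast
next
  fix e assume "e \<in> edges A"
  then obtain u v where "u \<in> A" "v \<in> A" "u < v" "e = {u, v}" unfolding edges_iff by blast
  then show "e \<in> {e \<in> edges {0..<n}. P e}" using P[of u v] A unfolding edges_iff by blast
qed

lemma G1_blue:
  assumes "k1 \<le> n"
  shows "ecount Blue (G1 n k1 k2) = k1 choose 2"
proof -
  have "{e \<in> edges (verts (G1 n k1 k2)). col (G1 n k1 k2) e = Blue} = edges {0..<k1}"
    unfolding G1_simps by (rule edges_filter_eq) (use assms in \<open>auto simp: col1_def MaxMin2\<close>)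
  then show ?thesis unfolding ecount_def by (simp add: card_edges)
qed

lemma G2_blue:
  assumes "k1 \<le> n"
  shows "ecount Blue (G2 n k1 k2) = k1 choose 2"
proof -
  have "{e \<in> edges (verts (G2 n k1 k2)). col (G2 n k1 k2) e = Blue} = edges {0..<k1}"
    unfolding G2_simps by (rule edges_filter_eq) (use assms in \<open>auto simp: col2_def MaxMin2\<close>)
  then show ?thesis unfolding ecount_def by (simp add: card_edges)
qed

lemma G1_green:
  assumes "k1 \<le> k2" "k2 \<le> n"
  shows "ecount Green (G1 n k1 k2) = (k2 - k1) choose 2"
proof -
  have "{e \<in> edges (verts (G1 n k1 k2)). col (G1 n k1 k2) e = Green} = edges {k1..<k2}"
    unfolding G1_simps by (rule edges_filter_eq) (use assms in \<open>auto simp: col1_def MaxMin2\<close>)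
  then show ?thesis unfolding ecount_def by (simp add: card_edges)
qed

lemma G2_red:
  assumes "k1 \<le> k2" "k2 \<le> n"
  shows "ecount Red (G2 n k1 k2) = k1 * (k2 - k1)"
proof -
  define g where "g p = {fst p, snd p}" for p :: "nat \<times> nat"
  have "{e \<in> edges (verts (G2 n k1 k2)). col (G2 n k1 k2) e = Red} = g ` ({0..<k1} \<times> {k1..<k2})"
  proof (intro equalityI subsetI)
    fix e assume "e \<in> {e \<in> edges (verts (G2 n k1 k2)). col (G2 n k1 k2) e = Red}"
    then obtain u v where "u < v" "v < n" "e = {u, v}" "col2 k1 k2 e = Red" unfolding edges_iff G2_simps by auto
    then have "u < k1" "k1 \<le> v" "v < k2" "e = g (u, v)" unfolding col2_def g_def by (auto simp: MaxMin2 split: if_splits)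
    then show "e \<in> g ` ({0..<k1} \<times> {k1..<k2})" by auto
  next
    fix e assume "e \<in> g ` ({0..<k1} \<times> {k1..<k2})"
    then obtain u v where "u < k1" "k1 \<le> v" "v < k2" "e = {u, v}" unfolding g_def by auto
    moreover have "u < v" using calculation by simp
    ultimately show "e \<in> {e \<in> edges (verts (G2 n k1 k2)). col (G2 n k1 k2) e = Red}"
    proof -
      have "u < n" "v < n" using \<open>u < v\<close> \<open>v < k2\<close> assms by auto
      then have "e \<in> edges {0..<n}" unfolding edges_iff using \<open>u < v\<close> \<open>e = {u, v}\<close> atLeastLessThan_iff zero_le by blast
      moreover have "col2 k1 k2 e = Red" using \<open>u < v\<close> \<open>u < k1\<close> \<open>k1 \<le> v\<close> \<open>v < k2\<close> \<open>e = {u, v}\<close>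
        unfolding col2_def by (simp add: MaxMin2)
      ultimately show ?thesis unfolding G2_simps by simp
    qed
  qed
  moreover have "inj_on g ({0..<k1} \<times> {k1..<k2})"
    unfolding g_def by (rule inj_onI) (auto simp: doubleton_eq_iff)
  ultimately show ?thesis unfolding ecount_def by (simp add: card_image card_cartesian_product)
qed



lemma quot_lim:
  assumes "(\<lambda>n. a n / real n ^ k) \<longlonglongrightarrow> A" "(\<lambda>n. b n / real n ^ k) \<longlonglongrightarrow> B" "B \<noteq> 0"
  shows "(\<lambda>n. a n / b n) \<longlonglongrightarrow> A / B"
proof -
  have l: "(\<lambda>n. (a n / real n ^ k) / (b n / real n ^ k)) \<longlonglongrightarrow> A / B"
    by (rule tendsto_divide[OF assms])
  have "eventually (\<lambda>n. (a n / real n ^ k) / (b n / real n ^ k) = a n / b n) sequentially"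
    by (rule eventually_sequentiallyI[of 1]) simp
  then show ?thesis by (rule Lim_transform_eventually[OF l])
qed

lemma ratio_lim:
  assumes "(\<lambda>n. real (m n) / real n) \<longlonglongrightarrow> c"
  shows "(\<lambda>n. real (m n choose k) / real (n choose k)) \<longlonglongrightarrow> c ^ k"
proof -
  have "(\<lambda>n. real (m n choose k) / real (n choose k)) \<longlonglongrightarrow> (c ^ k / fact k) / (1 / fact k)"
    by (rule quot_lim[OF binom_lim[OF assms] binom_n_lim]) simp
  then show ?thesis by simp
qed

lemma floor_seq:
  assumes p: "0 \<le> p" and q: "0 \<le> q" and pq: "p + q \<le> 1"
    and k1_def: "k1 = (\<lambda>n::nat. nat \<lfloor>p * real n\<rfloor>)" and k2_def: "k2 = (\<lambda>n::nat. nat \<lfloor>(p + q) * real n\<rfloor>)"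
  shows "\<And>n. k1 n \<le> k2 n" "\<And>n. k2 n \<le> n"
    "(\<lambda>n. real (k1 n) / real n) \<longlonglongrightarrow> p" "(\<lambda>n. real (k2 n - k1 n) / real n) \<longlonglongrightarrow> q"
proof -
  show le: "k1 n \<le> k2 n" for n
    unfolding k1_def k2_def using q by (intro nat_mono floor_mono) (simp add: distrib_right)
  show "k2 n \<le> n" for n
  proof -
    have "(p + q) * real n \<le> real n" using pq by (simp add: mult_left_le_one_le p q)
    then have "\<lfloor>(p + q) * real n\<rfloor> \<le> int n" by linarith
    then show ?thesis unfolding k2_def by simp
  qed
  show l1: "(\<lambda>n. real (k1 n) / real n) \<longlonglongrightarrow> p" unfolding k1_def by (rule floor_lim[OF p])
  have l2: "(\<lambda>n. real (k2 n) / real n) \<longlonglongrightarrow> p + q" unfolding k2_def by (rule floor_lim) (use p q in simp)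
  have "(\<lambda>n. real (k2 n) / real n - real (k1 n) / real n) \<longlonglongrightarrow> (p + q) - p"
    by (rule tendsto_diff[OF l2 l1])
  moreover have "real (k2 n - k1 n) / real n = real (k2 n) / real n - real (k1 n) / real n" for n
    using le[of n] by (simp add: of_nat_diff diff_divide_distrib)
  ultimately show "(\<lambda>n. real (k2 n - k1 n) / real n) \<longlonglongrightarrow> q" by simp
qed

lemma construct_realizes:
  fixes Gs :: "nat \<Rightarrow> cgraph" and k1 k2 :: "nat \<Rightarrow> nat" and Bk :: "nat \<Rightarrow> real"
  assumes V: "\<And>n. verts (Gs n) = {0..<n}"
    and low: "\<And>n. (k1 n choose s) * ((k2 n - k1 n) choose t) \<le> N3 (Kprime s t) (Gs n)"
    and l1: "(\<lambda>n. real (k1 n) / real n) \<longlonglongrightarrow> p" and l2: "(\<lambda>n. real (k2 n - k1 n) / real n) \<longlonglongrightarrow> q"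
    and eb: "(\<lambda>n. edens Blue (Gs n)) \<longlonglongrightarrow> xb" and eg: "(\<lambda>n. edens Green (Gs n)) \<longlonglongrightarrow> xg"
    and B: "Bk \<longlonglongrightarrow> \<beta>"
    and bnd: "\<And>k. 2 \<le> card (verts (Gs k)) \<Longrightarrow>
       real (N3 (Kprime s t) (Gs k)) * (fact s * fact t) \<le> Bk k * real (card (verts (Gs k))) ^ (s + t)"
    and T: "p ^ s * q ^ t = \<beta>"
  shows "realizes (Kprime s t) Gs xb xg (\<beta> * fact (s + t) / (fact s * fact t))"
proof -
  have card: "card (verts (Gs n)) = n" for n using V by simp
  have nlim: "filterlim (\<lambda>k. card (verts (Gs k))) at_top sequentially"
    unfolding card by (rule filterlim_ident)
  obtain U where U: "U \<longlonglongrightarrow> \<beta> * fact (s + t) / (fact s * fact t)"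
    "eventually (\<lambda>k. dens3 (Kprime s t) (Gs k) \<le> U k) sequentially"
    using upper_ev[OF nlim B bnd] by blast
  define L where "L n = (real (k1 n choose s) / real n ^ s * (real ((k2 n - k1 n) choose t) / real n ^ t))
      / (real (n choose (s + t)) / real n ^ (s + t))" for n
  have Ll: "L \<longlonglongrightarrow> (p ^ s / fact s * (q ^ t / fact t)) / (1 / fact (s + t))"
    unfolding L_def
    by (intro tendsto_divide tendsto_mult binom_lim l1 l2 binom_n_lim) simp
  have "(p ^ s / fact s * (q ^ t / fact t)) / (1 / fact (s + t)) = \<beta> * fact (s + t) / (fact s * fact t)"
    using T[symmetric] by simp
  then have Ll': "L \<longlonglongrightarrow> \<beta> * fact (s + t) / (fact s * fact t)" using Ll by simp
  have Lle: "eventually (\<lambda>k. L k \<le> dens3 (Kprime s t) (Gs k)) sequentially"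
  proof (rule eventually_sequentiallyI[of 1])
    fix n :: nat assume "1 \<le> n"
    then have np: "0 < real n" by simp
    have "L n = real ((k1 n choose s) * ((k2 n - k1 n) choose t)) / real (n choose (s + t))"
      unfolding L_def using np by (simp add: power_add field_simps)
    also have "\<dots> \<le> real (N3 (Kprime s t) (Gs n)) / real (n choose (s + t))"
    proof (rule divide_right_mono)
      show "real ((k1 n choose s) * ((k2 n - k1 n) choose t)) \<le> real (N3 (Kprime s t) (Gs n))"
        using low[of n] by (metis of_nat_le_iff)
    qed simp
    also have "\<dots> = dens3 (Kprime s t) (Gs n)" unfolding dens3_def by (simp add: card Kprime_verts)
    finally show "L n \<le> dens3 (Kprime s t) (Gs n)" .
  qed
  have dl: "(\<lambda>k. dens3 (Kprime s t) (Gs k)) \<longlonglongrightarrow> \<beta> * fact (s + t) / (fact s * fact t)"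
    by (rule tendsto_sandwich[OF Lle U(2) Ll' U(1)])
  show ?thesis unfolding realizes_def c3graph_def using V nlim eb eg dl by auto
qed



lemma edens_green:
  assumes "finite (verts G)" "2 \<le> card (verts G)"
  shows "edens Green G = 1 - edens Blue G - edens Red G"
  using edens_red[OF assms] by simp

lemma case1:
  fixes s t :: nat and xb xg :: real
  assumes s: "2 \<le> s" and t: "2 \<le> t" and xb: "0 \<le> xb" and xg: "0 \<le> xg"
    and sq: "sqrt xb + sqrt xg \<le> 1"
  shows "I3 (Kprime s t) xb xg = sqrt xb ^ s * sqrt xg ^ t * fact (s + t) / (fact s * fact t)"
proof -
  define \<beta> where "\<beta> = sqrt xb ^ s * sqrt xg ^ t"
  let ?S = "{y. \<exists>Gs. realizes (Kprime s t) Gs xb xg y}"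
  have upper: "y \<le> \<beta> * fact (s + t) / (fact s * fact t)" if "y \<in> ?S" for y
  proof -
    from that obtain Gs where R: "realizes (Kprime s t) Gs xb xg y" by blast
    have fin: "finite (verts (Gs k))" for k using R unfolding realizes_def c3graph_def by auto
    have eb: "(\<lambda>n. edens Blue (Gs n)) \<longlonglongrightarrow> xb" and eg: "(\<lambda>n. edens Green (Gs n)) \<longlonglongrightarrow> xg"
      using R unfolding realizes_def by auto
    have B: "(\<lambda>k. sqrt (edens Blue (Gs k)) ^ s * sqrt (edens Green (Gs k)) ^ t) \<longlonglongrightarrow> \<beta>"
      unfolding \<beta>_def by (intro tendsto_mult tendsto_power tendsto_real_sqrt eb eg)
    show ?thesis
      by (rule upper_general[OF R B ub1[OF fin _ s t]])
  qed
  define p where "p = sqrt xb"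
  define q where "q = sqrt xg"
  define k1 where "k1 = (\<lambda>n::nat. nat \<lfloor>p * real n\<rfloor>)"
  define k2 where "k2 = (\<lambda>n::nat. nat \<lfloor>(p + q) * real n\<rfloor>)"
  have p: "0 \<le> p" and q: "0 \<le> q" and pq: "p + q \<le> 1" using xb xg sq unfolding p_def q_def by auto
  note fs = floor_seq[OF p q pq k1_def k2_def]
  define Gs where "Gs n = G1 n (k1 n) (k2 n)" for n
  have V: "verts (Gs n) = {0..<n}" for n unfolding Gs_def G1_simps ..
  have eb: "(\<lambda>n. edens Blue (Gs n)) \<longlonglongrightarrow> xb"
  proof -
    have "(\<lambda>n. real (k1 n choose 2) / real (n choose 2)) \<longlonglongrightarrow> p ^ 2" by (rule ratio_lim[OF fs(3)])
    moreover have "edens Blue (Gs n) = real (k1 n choose 2) / real (n choose 2)" for n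
      unfolding edens_def Gs_def using fs(1,2)[of n] by (simp add: G1_blue G1_simps)
    moreover have "p ^ 2 = xb" unfolding p_def using xb by simp
    ultimately show ?thesis by simp
  qed
  have eg: "(\<lambda>n. edens Green (Gs n)) \<longlonglongrightarrow> xg"
  proof -
    have "(\<lambda>n. real ((k2 n - k1 n) choose 2) / real (n choose 2)) \<longlonglongrightarrow> q ^ 2" by (rule ratio_lim[OF fs(4)])
    moreover have "edens Green (Gs n) = real ((k2 n - k1 n) choose 2) / real (n choose 2)" for n
      unfolding edens_def Gs_def using fs(1,2)[of n] by (simp add: G1_green G1_simps)
    moreover have "q ^ 2 = xg" unfolding q_def using xg by simp
    ultimately show ?thesis by simp
  qed
  have fin: "finite (verts (Gs k))" for k using V by simp
  have B: "(\<lambda>k. sqrt (edens Blue (Gs k)) ^ s * sqrt (edens Green (Gs k)) ^ t) \<longlonglongrightarrow> \<beta>"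
    unfolding \<beta>_def by (intro tendsto_mult tendsto_power tendsto_real_sqrt eb eg)
  have "realizes (Kprime s t) Gs xb xg (\<beta> * fact (s + t) / (fact s * fact t))"
  proof (rule construct_realizes[OF V _ fs(3) fs(4) eb eg B ub1[OF fin _ s t]])
    show "(k1 n choose s) * ((k2 n - k1 n) choose t) \<le> N3 (Kprime s t) (Gs n)" for n
      unfolding Gs_def by (rule G1_lower[OF fs(1,2)])
    show "p ^ s * q ^ t = \<beta>" unfolding \<beta>_def p_def q_def ..
  qed
  then have mem: "\<beta> * fact (s + t) / (fact s * fact t) \<in> ?S" by blast
  have "I3 (Kprime s t) xb xg = \<beta> * fact (s + t) / (fact s * fact t)"
    unfolding I3_def by (rule cSup_eq_maximum[OF mem upper])
  then show ?thesis unfolding \<beta>_def by simp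
qed

lemma case2:
  fixes s :: nat and xb xg xr :: real
  assumes s: "2 \<le> s" and xb: "0 \<le> xb" "xb \<le> 1" and xg: "0 \<le> xg" "xg \<le> 1" and xr: "0 \<le> xr"
    and sum: "xb + xg + xr = 1" and sq: "sqrt xb + sqrt xg > 1"
  shows "I3 (Kprime s s) xb xg = (xr / 2) ^ s * fact (s + s) / (fact s * fact s)"
proof -
  define \<beta> where "\<beta> = (xr / 2) ^ s"
  let ?S = "{y. \<exists>Gs. realizes (Kprime s s) Gs xb xg y}"
  have bnd: "\<And>k. 2 \<le> card (verts (Gs k)) \<Longrightarrow> real (N3 (Kprime s s) (Gs k)) * (fact s * fact s) \<le>
      ((1 - edens Blue (Gs k) - edens Green (Gs k)) / 2) ^ s * real (card (verts (Gs k))) ^ (s + s)"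
    if fin: "\<And>k. finite (verts (Gs k))" for Gs
    using ub2[OF fin _ s] edens_red[OF fin] by simp
  have Bl: "(\<lambda>k. ((1 - edens Blue (Gs k) - edens Green (Gs k)) / 2) ^ s) \<longlonglongrightarrow> \<beta>"
    if eb: "(\<lambda>n. edens Blue (Gs n)) \<longlonglongrightarrow> xb" and eg: "(\<lambda>n. edens Green (Gs n)) \<longlonglongrightarrow> xg" for Gs
  proof -
    have "(\<lambda>k. ((1 - edens Blue (Gs k) - edens Green (Gs k)) / 2) ^ s) \<longlonglongrightarrow> ((1 - xb - xg) / 2) ^ s"
      by (intro tendsto_power tendsto_divide tendsto_diff tendsto_const eb eg) simp
    moreover have "1 - xb - xg = xr" using sum by simp
    ultimately show ?thesis unfolding \<beta>_def by simp
  qed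
  have upper: "y \<le> \<beta> * fact (s + s) / (fact s * fact s)" if "y \<in> ?S" for y
  proof -
    from that obtain Gs where R: "realizes (Kprime s s) Gs xb xg y" by blast
    have fin: "finite (verts (Gs k))" for k using R unfolding realizes_def c3graph_def by auto
    have eb: "(\<lambda>n. edens Blue (Gs n)) \<longlonglongrightarrow> xb" and eg: "(\<lambda>n. edens Green (Gs n)) \<longlonglongrightarrow> xg"
      using R unfolding realizes_def by auto
    have b: "real (N3 (Kprime s s) (Gs k)) * (fact s * fact s) \<le>
      ((1 - edens Blue (Gs k) - edens Green (Gs k)) / 2) ^ s * real (card (verts (Gs k))) ^ (s + s)"
      if "2 \<le> card (verts (Gs k))" for k using bnd[of Gs, OF fin that] .
    show ?thesis
      by (rule upper_general[OF R Bl[OF eb eg] b])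
  qed
  define p where "p = sqrt xb"
  have pa: "0 < p" using sq xg unfolding p_def
    by (smt (verit, best) real_sqrt_le_1_iff real_sqrt_gt_zero xb(1))
  define q where "q = xr / (2 * p)"
  have q: "0 \<le> q" unfolding q_def using pa xr by simp
  have p2: "p ^ 2 = xb" unfolding p_def using xb by simp
  have pqr: "p * q = xr / 2" unfolding q_def using pa by simp
  have pq: "p + q \<le> 1"
  proof -
    have a: "1 - p \<le> sqrt xg" using sq unfolding p_def by simp
    have p1: "p \<le> 1" unfolding p_def using xb by simp
    have "(1 - p) ^ 2 \<le> xg" using power_mono[OF a, of 2] p1 xg by simp
    then have "1 - 2 * p + xb \<le> xg" using p2 by (simp add: power2_eq_square algebra_simps)
    then have "xr \<le> 2 * p * (1 - p)" using sum p2 by (simp add: power2_eq_square algebra_simps)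
    then have "q \<le> 1 - p" unfolding q_def using pa by (simp add: field_simps)
    then show ?thesis by simp
  qed
  define k1 where "k1 = (\<lambda>n::nat. nat \<lfloor>p * real n\<rfloor>)"
  define k2 where "k2 = (\<lambda>n::nat. nat \<lfloor>(p + q) * real n\<rfloor>)"
  note fs = floor_seq[OF less_imp_le[OF pa] q pq k1_def k2_def]
  define Gs where "Gs n = G2 n (k1 n) (k2 n)" for n
  have V: "verts (Gs n) = {0..<n}" for n unfolding Gs_def G2_simps ..
  have fin: "finite (verts (Gs k))" for k using V by simp
  have eb: "(\<lambda>n. edens Blue (Gs n)) \<longlonglongrightarrow> xb"
  proof -
    have "(\<lambda>n. real (k1 n choose 2) / real (n choose 2)) \<longlonglongrightarrow> p ^ 2" by (rule ratio_lim[OF fs(3)])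
    moreover have "edens Blue (Gs n) = real (k1 n choose 2) / real (n choose 2)" for n
      unfolding edens_def Gs_def using fs(1,2)[of n] by (simp add: G2_blue G2_simps)
    ultimately show ?thesis using p2 by simp
  qed
  have er: "(\<lambda>n. edens Red (Gs n)) \<longlonglongrightarrow> xr"
  proof -
    have a: "(\<lambda>n. real (k1 n * (k2 n - k1 n)) / real n ^ 2) \<longlonglongrightarrow> p * q"
    proof -
      have eq: "(\<lambda>n. real (k1 n * (k2 n - k1 n)) / real n ^ 2) = (\<lambda>n. real (k1 n) / real n * (real (k2 n - k1 n) / real n))"
        by (rule ext) (simp add: power2_eq_square)
      show ?thesis unfolding eq by (rule tendsto_mult[OF fs(3) fs(4)])
    qed
    have "(\<lambda>n. real (k1 n * (k2 n - k1 n)) / real (n choose 2)) \<longlonglongrightarrow> (p * q) / (1 / fact 2)"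
      by (rule quot_lim[OF a binom_n_lim]) simp
    moreover have "edens Red (Gs n) = real (k1 n * (k2 n - k1 n)) / real (n choose 2)" for n
      unfolding edens_def Gs_def using fs(1,2)[of n] by (simp add: G2_red G2_simps)
    moreover have "(p * q) / (1 / fact 2) = xr" using pqr by simp
    ultimately show ?thesis by simp
  qed
  have eg: "(\<lambda>n. edens Green (Gs n)) \<longlonglongrightarrow> xg"
  proof -
    have l: "(\<lambda>n. 1 - edens Blue (Gs n) - edens Red (Gs n)) \<longlonglongrightarrow> 1 - xb - xr"
      by (intro tendsto_diff tendsto_const eb er)
    have "eventually (\<lambda>n. 1 - edens Blue (Gs n) - edens Red (Gs n) = edens Green (Gs n)) sequentially"
    proof (rule eventually_sequentiallyI[of 2])
      fix n :: nat assume "2 \<le> n"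
      then show "1 - edens Blue (Gs n) - edens Red (Gs n) = edens Green (Gs n)"
        using edens_green[OF fin, of n] V by simp
    qed
    moreover have "1 - xb - xr = xg" using sum by simp
    ultimately show ?thesis using Lim_transform_eventually[OF l] by metis
  qed
  have b: "real (N3 (Kprime s s) (Gs k)) * (fact s * fact s) \<le>
      ((1 - edens Blue (Gs k) - edens Green (Gs k)) / 2) ^ s * real (card (verts (Gs k))) ^ (s + s)"
    if "2 \<le> card (verts (Gs k))" for k using bnd[of Gs, OF fin that] .
  have "realizes (Kprime s s) Gs xb xg (\<beta> * fact (s + s) / (fact s * fact s))"
  proof (rule construct_realizes[OF V _ fs(3) fs(4) eb eg Bl[OF eb eg] b])
    show "(k1 n choose s) * ((k2 n - k1 n) choose s) \<le> N3 (Kprime s s) (Gs n)" for n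
      unfolding Gs_def by (rule G2_lower[OF fs(1,2)])
    show "p ^ s * q ^ s = \<beta>" unfolding \<beta>_def pqr[symmetric] by (simp only: power_mult_distrib)
  qed
  then have mem: "\<beta> * fact (s + s) / (fact s * fact s) \<in> ?S" by blast
  have "I3 (Kprime s s) xb xg = \<beta> * fact (s + s) / (fact s * fact s)"
    unfolding I3_def by (rule cSup_eq_maximum[OF mem upper])
  then show ?thesis unfolding \<beta>_def by simp
qed

theorem theorem3:
  fixes s t :: nat and xb xg xr :: real
  assumes "2 \<le> s" "s \<le> t"
    and "xb \<in> {0..1}" "xg \<in> {0..1}" "xr \<in> {0..1}" "xb + xg + xr = 1"
  shows "(sqrt xb + sqrt xg \<le> 1 \<longrightarrow>
           I3 (Kprime s t) xb xg = xb powr (real s / 2) * xg powr (real t / 2) * real ((s + t) choose s))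
       \<and> (sqrt xb + sqrt xg > 1 \<longrightarrow>
           I3 (Kprime s s) xb xg = (xr / 2) ^ s * real ((2 * s) choose s))"
proof (intro conjI impI)
  assume sq: "sqrt xb + sqrt xg \<le> 1"
  have t: "2 \<le> t" using assms by simp
  have "I3 (Kprime s t) xb xg = sqrt xb ^ s * sqrt xg ^ t * fact (s + t) / (fact s * fact t)"
    using case1[OF assms(1) t _ _ sq] assms by simp
  moreover have "xb powr (real s / 2) = sqrt xb ^ s" using assms by (intro powr_sqrt) auto
  moreover have "xg powr (real t / 2) = sqrt xg ^ t" using assms t by (intro powr_sqrt) auto
  moreover have "real ((s + t) choose s) = fact (s + t) / (fact s * fact t)"
    using binomial_fact[of s "s + t", where 'a=real] by simp
  ultimately show "I3 (Kprime s t) xb xg = xb powr (real s / 2) * xg powr (real t / 2) * real ((s + t) choose s)"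
    by simp
next
  assume sq: "sqrt xb + sqrt xg > 1"
  have "I3 (Kprime s s) xb xg = (xr / 2) ^ s * fact (s + s) / (fact s * fact s)"
    using case2[OF assms(1) _ _ _ _ _ assms(6) sq] assms by simp
  moreover have "real ((2 * s) choose s) = fact (s + s) / (fact s * fact s)"
    using binomial_fact[of s "2 * s", where 'a=real] by (simp add: mult_2)
  ultimately show "I3 (Kprime s s) xb xg = (xr / 2) ^ s * real ((2 * s) choose s)" by simp
qed

end
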